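(* Let $H$ be a complex Hilbert space, $\varphi,\psi:[0,1]\to\mathbb{R}$ continuous, and $A\in\mathbb{B}(H)$. Then the functions $t\mapsto\omega_t(\varphi,\psi;A)$ and $t\mapsto c_t(\varphi,\psi;A)$ are continuous on $[0,1]$.
   Context: $S_1(H)$ is the unit sphere of $H$; $\omega_t(\varphi,\psi;A)=\sup_{x\in S_1(H)}|\langle(\varphi(t)A+\psi(t)A^* )x,x\rangle|$ and $c_t(\varphi,\psi;A)=\inf_{x\in S_1(H)}|\langle(\varphi(t)A+\psi(t)A^* )x,x\rangle|$. *)

theory Defs
  imports "HOL-Analysis.Analysis"
begin

text \<open>A complex Hilbert space is represented by a carrier type 'h with an additive
  group structure, a complex scalar multiplication sc and a complex inner product ip
  (linear in the first argument, conjugate-symmetric, positive definite), complete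
  with respect to the induced norm.\<close>

definition hnorm :: "('h \<Rightarrow> 'h \<Rightarrow> complex) \<Rightarrow> 'h \<Rightarrow> real" where
  "hnorm ip x = sqrt (Re (ip x x))"

definition complex_hilbert_space ::
  "(complex \<Rightarrow> 'h::ab_group_add \<Rightarrow> 'h) \<Rightarrow> ('h \<Rightarrow> 'h \<Rightarrow> complex) \<Rightarrow> bool" where
  "complex_hilbert_space sc ip \<longleftrightarrow>
     (\<forall>a x y. sc a (x + y) = sc a x + sc a y) \<and>
     (\<forall>a b x. sc (a + b) x = sc a x + sc b x) \<and>
     (\<forall>a b x. sc a (sc b x) = sc (a * b) x) \<and>
     (\<forall>x. sc 1 x = x) \<and>
     (\<forall>x y z. ip (x + y) z = ip x z + ip y z) \<and>
     (\<forall>a x y. ip (sc a x) y = a * ip x y) \<and>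
     (\<forall>x y. ip y x = cnj (ip x y)) \<and>
     (\<forall>x. Im (ip x x) = 0 \<and> Re (ip x x) \<ge> 0) \<and>
     (\<forall>x. ip x x = 0 \<longrightarrow> x = 0) \<and>
     (\<forall>X::nat \<Rightarrow> 'h.
        (\<forall>e>0. \<exists>N. \<forall>m\<ge>N. \<forall>n\<ge>N. hnorm ip (X m - X n) < e) \<longrightarrow>
        (\<exists>L. \<forall>e>0. \<exists>N. \<forall>n\<ge>N. hnorm ip (X n - L) < e))"

definition bounded_operator ::
  "(complex \<Rightarrow> 'h::ab_group_add \<Rightarrow> 'h) \<Rightarrow> ('h \<Rightarrow> 'h \<Rightarrow> complex) \<Rightarrow> ('h \<Rightarrow> 'h) \<Rightarrow> bool" where
  "bounded_operator sc ip A \<longleftrightarrow>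
     (\<forall>x y. A (x + y) = A x + A y) \<and> (\<forall>a x. A (sc a x) = sc a (A x)) \<and>
     (\<exists>K. \<forall>x. hnorm ip (A x) \<le> K * hnorm ip x)"

definition adjoint_op ::
  "('h \<Rightarrow> 'h \<Rightarrow> complex) \<Rightarrow> ('h \<Rightarrow> 'h) \<Rightarrow> ('h \<Rightarrow> 'h) \<Rightarrow> bool" where
  "adjoint_op ip A As \<longleftrightarrow> (\<forall>x y. ip (A x) y = ip x (As y))"

definition unit_sphere :: "('h \<Rightarrow> 'h \<Rightarrow> complex) \<Rightarrow> 'h set" where
  "unit_sphere ip = {x. hnorm ip x = 1}"

definition omega_t ::
  "(complex \<Rightarrow> 'h::ab_group_add \<Rightarrow> 'h) \<Rightarrow> ('h \<Rightarrow> 'h \<Rightarrow> complex) \<Rightarrow> (real \<Rightarrow> real) \<Rightarrow> (real \<Rightarrow> real)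
     \<Rightarrow> ('h \<Rightarrow> 'h) \<Rightarrow> ('h \<Rightarrow> 'h) \<Rightarrow> real \<Rightarrow> real" where
  "omega_t sc ip \<phi> \<psi> A As t =
     (SUP x\<in>unit_sphere ip. cmod (ip (sc (of_real (\<phi> t)) (A x) + sc (of_real (\<psi> t)) (As x)) x))"

definition c_t ::
  "(complex \<Rightarrow> 'h::ab_group_add \<Rightarrow> 'h) \<Rightarrow> ('h \<Rightarrow> 'h \<Rightarrow> complex) \<Rightarrow> (real \<Rightarrow> real) \<Rightarrow> (real \<Rightarrow> real)
     \<Rightarrow> ('h \<Rightarrow> 'h) \<Rightarrow> ('h \<Rightarrow> 'h) \<Rightarrow> real \<Rightarrow> real" where
  "c_t sc ip \<phi> \<psi> A As t =
     (INF x\<in>unit_sphere ip. cmod (ip (sc (of_real (\<phi> t)) (A x) + sc (of_real (\<psi> t)) (As x)) x))"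

end

theory Submission imports Defs begin


lemma hs_facts:
  assumes H: "complex_hilbert_space sc ip"
  shows "\<And>x y z. ip (x + y) z = ip x z + ip y z"
    "\<And>a x y. ip (sc a x) y = a * ip x y"
    "\<And>x y. ip y x = cnj (ip x y)"
    "\<And>x. Im (ip x x) = 0" "\<And>x. Re (ip x x) \<ge> 0"
proof -
  note D = H[unfolded complex_hilbert_space_def, THEN conjunct2, THEN conjunct2, THEN conjunct2, THEN conjunct2]
  note D1 = D[THEN conjunct1] and D2 = D[THEN conjunct2, THEN conjunct1]
    and D3 = D[THEN conjunct2, THEN conjunct2, THEN conjunct1]
    and D4 = D[THEN conjunct2, THEN conjunct2, THEN conjunct2, THEN conjunct1]
  show "\<And>x y z. ip (x + y) z = ip x z + ip y z" using D1 by blast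
  show "\<And>a x y. ip (sc a x) y = a * ip x y" using D2 by blast
  show "\<And>x y. ip y x = cnj (ip x y)" using D3 by blast
  show "\<And>x. Im (ip x x) = 0" using D4 by blast
  show "\<And>x. Re (ip x x) \<ge> 0" using D4 by blast
qed

lemma ip_diff_left:
  assumes "complex_hilbert_space sc ip"
  shows "ip (x - y) z = ip x z - ip y z"
proof -
  have "ip (x - y) z + ip y z = ip x z" using hs_facts(1)[OF assms, of "x-y" y z] by simp
  then show ?thesis by (simp add: algebra_simps)
qed

lemma ip_right:
  assumes H: "complex_hilbert_space sc ip"
  shows "ip x (y - z) = ip x y - ip x z" "ip x (sc a y) = cnj a * ip x y"
proof -
  have "ip x (y - z) = cnj (ip (y - z) x)" by (rule hs_facts(3)[OF H])
  also have "\<dots> = cnj (ip y x) - cnj (ip z x)" by (simp add: ip_diff_left[OF H])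
  also have "\<dots> = ip x y - ip x z" by (simp add: hs_facts(3)[OF H, of x y] hs_facts(3)[OF H, of x z])
  finally show "ip x (y - z) = ip x y - ip x z" .
  have "ip x (sc a y) = cnj (ip (sc a y) x)" by (rule hs_facts(3)[OF H])
  also have "\<dots> = cnj a * cnj (ip y x)" by (simp add: hs_facts(2)[OF H])
  also have "\<dots> = cnj a * ip x y" by (simp add: hs_facts(3)[OF H, of x y])
  finally show "ip x (sc a y) = cnj a * ip x y" .
qed

lemma key_bound:
  assumes H: "complex_hilbert_space sc ip"
  shows "2 * cmod (ip y x) \<le> Re (ip y y) + Re (ip x x)"
proof (cases "ip y x = 0")
  case True then show ?thesis using hs_facts(5)[OF H, of x] hs_facts(5)[OF H, of y] by simp
next
  case False
  define c where "c = ip y x"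
  define u where "u = c / complex_of_real (cmod c)"
  define w where "w = sc u x"
  have cn: "cmod c \<noteq> 0" using False c_def by simp
  have nu: "cmod u = 1" unfolding u_def using cn by (simp add: norm_divide)
  have uu: "u * cnj u = 1"
    using complex_norm_square[of u] nu by simp
  have e1: "ip y w = complex_of_real (cmod c)"
  proof -
    have "ip y w = cnj u * c" unfolding w_def ip_right(2)[OF H] c_def ..
    also have "\<dots> = (c * cnj c) / complex_of_real (cmod c)" unfolding u_def by (simp add: field_simps)
    also have "\<dots> = (complex_of_real (cmod c))^2 / complex_of_real (cmod c)" by (simp only: complex_norm_square[symmetric] of_real_power)
    also have "\<dots> = complex_of_real (cmod c)" using cn by (simp add: power2_eq_square)
    finally show ?thesis .
  qed
  have e2: "ip w y = complex_of_real (cmod c)"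
    by (subst hs_facts(3)[OF H]) (simp add: e1)
  have e3: "ip w w = ip x x"
    unfolding w_def ip_right(2)[OF H] hs_facts(2)[OF H] using uu by (simp add: mult.assoc[symmetric] mult.commute)
  have "ip (y - w) (y - w) = ip y y - ip y w - (ip w y - ip w w)"
    by (simp add: ip_diff_left[OF H] ip_right(1)[OF H])
  also have "\<dots> = ip y y + ip x x - 2 * complex_of_real (cmod c)" using e1 e2 e3 by simp
  finally have "Re (ip (y - w) (y - w)) = Re (ip y y) + Re (ip x x) - 2 * cmod c" by simp
  then show ?thesis using hs_facts(5)[OF H, of "y - w"] c_def by simp
qed

lemma sup_lip:
  fixes F G :: "'a \<Rightarrow> real"
  assumes "bdd_above (F ` S)" "bdd_above (G ` S)" "\<forall>x\<in>S. \<bar>F x - G x\<bar> \<le> d" "d \<ge> 0"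
  shows "\<bar>(SUP x\<in>S. F x) - (SUP x\<in>S. G x)\<bar> \<le> d"
proof (cases "S = {}")
  case True then show ?thesis using assms by simp
next
  case False
  have 1: "(SUP x\<in>S. F x) \<le> (SUP x\<in>S. G x) + d"
  proof (rule cSUP_least[OF False])
    fix x assume "x \<in> S"
    then have "F x \<le> G x + d" "G x \<le> (SUP x\<in>S. G x)" using assms cSUP_upper[of x S G] by auto
    then show "F x \<le> (SUP x\<in>S. G x) + d" by linarith
  qed
  have 2: "(SUP x\<in>S. G x) \<le> (SUP x\<in>S. F x) + d"
  proof (rule cSUP_least[OF False])
    fix x assume "x \<in> S"
    then have "G x \<le> F x + d" "F x \<le> (SUP x\<in>S. F x)" using assms cSUP_upper[of x S F] by auto
    then show "G x \<le> (SUP x\<in>S. F x) + d" by linarith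
  qed
  from 1 2 show ?thesis by linarith
qed

lemma inf_lip:
  fixes F G :: "'a \<Rightarrow> real"
  assumes "bdd_below (F ` S)" "bdd_below (G ` S)" "\<forall>x\<in>S. \<bar>F x - G x\<bar> \<le> d" "d \<ge> 0"
  shows "\<bar>(INF x\<in>S. F x) - (INF x\<in>S. G x)\<bar> \<le> d"
proof (cases "S = {}")
  case True then show ?thesis using assms by simp
next
  case False
  have 1: "(INF x\<in>S. F x) \<ge> (INF x\<in>S. G x) - d"
  proof (rule cINF_greatest[OF False])
    fix x assume "x \<in> S"
    then have "G x \<le> F x + d" "G x \<ge> (INF x\<in>S. G x)" using assms cINF_lower[of G S x] by auto
    then show "F x \<ge> (INF x\<in>S. G x) - d" by linarith
  qed
  have 2: "(INF x\<in>S. G x) \<ge> (INF x\<in>S. F x) - d"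
  proof (rule cINF_greatest[OF False])
    fix x assume "x \<in> S"
    then have "F x \<le> G x + d" "F x \<ge> (INF x\<in>S. F x)" using assms cINF_lower[of F S x] by auto
    then show "G x \<ge> (INF x\<in>S. F x) - d" by linarith
  qed
  from 1 2 show ?thesis by linarith
qed

lemma cont_from_bound:
  fixes h \<phi> \<psi> :: "real \<Rightarrow> real"
  assumes "continuous_on I \<phi>" "continuous_on I \<psi>"
    and b: "\<forall>s\<in>I. \<forall>t\<in>I. \<bar>h s - h t\<bar> \<le> M * (\<bar>\<phi> s - \<phi> t\<bar> + \<bar>\<psi> s - \<psi> t\<bar>)"
  shows "continuous_on I h"
  unfolding continuous_on_def
proof
  fix t assume t: "t \<in> I"
  have "((\<lambda>s. \<phi> s - \<phi> t) \<longlongrightarrow> \<phi> t - \<phi> t) (at t within I)"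
    using assms(1) t by (intro tendsto_intros) (auto simp: continuous_on_def)
  moreover have "((\<lambda>s. \<psi> s - \<psi> t) \<longlongrightarrow> \<psi> t - \<psi> t) (at t within I)"
    using assms(2) t by (intro tendsto_intros) (auto simp: continuous_on_def)
  ultimately have g: "((\<lambda>s. M * (\<bar>\<phi> s - \<phi> t\<bar> + \<bar>\<psi> s - \<psi> t\<bar>)) \<longlongrightarrow> M * (\<bar>0\<bar> + \<bar>0\<bar>)) (at t within I)"
    by (intro tendsto_intros) auto
  have ev: "eventually (\<lambda>s. norm (h s - h t) \<le> M * (\<bar>\<phi> s - \<phi> t\<bar> + \<bar>\<psi> s - \<psi> t\<bar>)) (at t within I)"
    using b t by (auto simp: eventually_at_filter)
  have "((\<lambda>s. h s - h t) \<longlongrightarrow> 0) (at t within I)"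
    using Lim_null_comparison[OF ev] g by simp
  then show "(h \<longlongrightarrow> h t) (at t within I)" by (simp add: LIM_zero_iff)
qed

theorem theorem2p7:
  fixes sc :: "complex \<Rightarrow> 'h::ab_group_add \<Rightarrow> 'h"
    and ip :: "'h \<Rightarrow> 'h \<Rightarrow> complex"
    and \<phi> \<psi> :: "real \<Rightarrow> real"
    and A As :: "'h \<Rightarrow> 'h"
  assumes "complex_hilbert_space sc ip"
    and "continuous_on {0..1} \<phi>" and "continuous_on {0..1} \<psi>"
    and "bounded_operator sc ip A"
    and "adjoint_op ip A As"
  shows "continuous_on {0..1} (omega_t sc ip \<phi> \<psi> A As) \<and>
         continuous_on {0..1} (c_t sc ip \<phi> \<psi> A As)"
proof -
  note H = assms(1)
  obtain K where K: "\<And>x. hnorm ip (A x) \<le> K * hnorm ip x"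
    using assms(4) unfolding bounded_operator_def by blast
  define S where "S = unit_sphere ip"
  define M where "M = (K^2 + 1) / 2"
  define a where "a x = ip (A x) x" for x
  define b where "b x = ip (As x) x" for x
  have hn2: "Re (ip x x) = (hnorm ip x)^2" for x
    unfolding hnorm_def using hs_facts(5)[OF H, of x] by simp
  have ab: "cmod (a x) \<le> M \<and> cmod (b x) \<le> M" if "x \<in> S" for x
  proof -
    have x1: "hnorm ip x = 1" using that unfolding S_def unit_sphere_def by simp
    have "hnorm ip (A x) \<le> K" using K[of x] x1 by simp
    moreover have "hnorm ip (A x) \<ge> 0" unfolding hnorm_def using hs_facts(5)[OF H, of "A x"] by simp
    ultimately have "(hnorm ip (A x))^2 \<le> K^2" by (simp add: power_mono)
    then have "2 * cmod (a x) \<le> K^2 + 1"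
      using key_bound[OF H, of "A x" x] hn2[of "A x"] hn2[of x] x1 unfolding a_def by simp
    moreover have "b x = cnj (a x)" unfolding a_def b_def
      using assms(5) hs_facts(3)[OF H, of x "As x"] unfolding adjoint_op_def by simp
    ultimately show ?thesis unfolding M_def by simp
  qed
  define F where "F t x = cmod (complex_of_real (\<phi> t) * a x + complex_of_real (\<psi> t) * b x)" for t x
  have eqF: "cmod (ip (sc (of_real (\<phi> t)) (A x) + sc (of_real (\<psi> t)) (As x)) x) = F t x" for t x
    unfolding F_def a_def b_def hs_facts(1)[OF H] hs_facts(2)[OF H] by simp
  have om: "omega_t sc ip \<phi> \<psi> A As t = (SUP x\<in>S. F t x)" for t
    unfolding omega_t_def S_def eqF ..
  have ct: "c_t sc ip \<phi> \<psi> A As t = (INF x\<in>S. F t x)" for t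
    unfolding c_t_def S_def eqF ..
  have M0: "M \<ge> 0" unfolding M_def by simp
  have lip: "\<bar>F s x - F t x\<bar> \<le> M * (\<bar>\<phi> s - \<phi> t\<bar> + \<bar>\<psi> s - \<psi> t\<bar>)" if "x \<in> S" for s t x
  proof -
    define p where "p = \<phi> s - \<phi> t"
    define q where "q = \<psi> s - \<psi> t"
    have eq: "(complex_of_real (\<phi> s) * a x + complex_of_real (\<psi> s) * b x) -
              (complex_of_real (\<phi> t) * a x + complex_of_real (\<psi> t) * b x)
             = complex_of_real p * a x + complex_of_real q * b x"
      unfolding p_def q_def by (simp add: algebra_simps)
    have "\<bar>F s x - F t x\<bar> \<le> cmod (complex_of_real p * a x + complex_of_real q * b x)"
      unfolding F_def eq[symmetric] by (rule norm_triangle_ineq3)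
    also have "\<dots> \<le> \<bar>p\<bar> * cmod (a x) + \<bar>q\<bar> * cmod (b x)"
      using norm_triangle_ineq[of "complex_of_real p * a x" "complex_of_real q * b x"]
      by (simp add: norm_mult)
    also have "\<dots> \<le> \<bar>p\<bar> * M + \<bar>q\<bar> * M"
      using ab[OF that] by (intro add_mono mult_left_mono) auto
    finally show ?thesis unfolding p_def q_def by (simp add: algebra_simps)
  qed
  have bdd: "F t x \<le> \<bar>\<phi> t\<bar> * M + \<bar>\<psi> t\<bar> * M" if "x \<in> S" for t x
  proof -
    have "F t x \<le> \<bar>\<phi> t\<bar> * cmod (a x) + \<bar>\<psi> t\<bar> * cmod (b x)"
      unfolding F_def
      using norm_triangle_ineq[of "complex_of_real (\<phi> t) * a x" "complex_of_real (\<psi> t) * b x"]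
      by (simp add: norm_mult)
    also have "\<dots> \<le> \<bar>\<phi> t\<bar> * M + \<bar>\<psi> t\<bar> * M"
      using ab[OF that] by (intro add_mono mult_left_mono) auto
    finally show ?thesis .
  qed
  have ba: "bdd_above (F t ` S)" for t
    using bdd by (intro bdd_aboveI2) blast
  have bb: "bdd_below (F t ` S)" for t
    by (rule bdd_belowI2[where m=0]) (simp add: F_def)
  have dpos: "0 \<le> M * (\<bar>\<phi> s - \<phi> t\<bar> + \<bar>\<psi> s - \<psi> t\<bar>)" for s t using M0 by simp
  have o1: "\<forall>s\<in>{0..1}. \<forall>t\<in>{0..1}. \<bar>omega_t sc ip \<phi> \<psi> A As s - omega_t sc ip \<phi> \<psi> A As t\<bar>
      \<le> M * (\<bar>\<phi> s - \<phi> t\<bar> + \<bar>\<psi> s - \<psi> t\<bar>)"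
  proof (intro ballI)
    fix s t :: real
    show "\<bar>omega_t sc ip \<phi> \<psi> A As s - omega_t sc ip \<phi> \<psi> A As t\<bar>
      \<le> M * (\<bar>\<phi> s - \<phi> t\<bar> + \<bar>\<psi> s - \<psi> t\<bar>)"
      unfolding om by (rule sup_lip[OF ba ba _ dpos]) (use lip in blast)
  qed
  have c1: "\<forall>s\<in>{0..1}. \<forall>t\<in>{0..1}. \<bar>c_t sc ip \<phi> \<psi> A As s - c_t sc ip \<phi> \<psi> A As t\<bar>
      \<le> M * (\<bar>\<phi> s - \<phi> t\<bar> + \<bar>\<psi> s - \<psi> t\<bar>)"
  proof (intro ballI)
    fix s t :: real
    show "\<bar>c_t sc ip \<phi> \<psi> A As s - c_t sc ip \<phi> \<psi> A As t\<bar>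
      \<le> M * (\<bar>\<phi> s - \<phi> t\<bar> + \<bar>\<psi> s - \<psi> t\<bar>)"
      unfolding ct by (rule inf_lip[OF bb bb _ dpos]) (use lip in blast)
  qed
  show ?thesis
    using cont_from_bound[OF assms(2,3) o1] cont_from_bound[OF assms(2,3) c1] by blast
qed

end
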